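(* Let $G$ and $H$ be graphs without isolated vertices. Then $G$ and $H$ are isomorphic as graphs if and only if $B(G)$ and $B(H)$ are isomorphic as $\mathbb{Z}_2$-posets, i.e. there is an order isomorphism $B(G)\to B(H)$ commuting with the involutions.
   Context: A graph $G$ is a set $V(G)$ together with a symmetric subset $E(G) \subset V(G)\times V(G)$ (undirected, no multiple edges, loops allowed; graphs may be infinite). For $v \in V(G)$, $N(v)=\{w : (v,w)\in E(G)\}$; $v$ is isolated if $N(v)=\emptyset$. The box complex $B(G)$ is the poset of all pairs $(\sigma,\tau)$ of non-empty (possibly infinite) subsets of $V(G)$ with $\sigma\times\tau\subset E(G)$, ordered by $(\sigma,\tau)\le(\sigma',\tau')$ iff $\sigma\subset\sigma'$ and $\tau\subset\tau'$, and equipped with the involution $(\sigma,\tau)\leftrightarrow(\tau,\sigma)$. *)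

theory Defs
  imports Main
begin

text \<open>A graph: vertex set V and a symmetric edge relation E \<subseteq> V \<times> V
  (undirected, loops allowed, possibly infinite).\<close>
definition is_graph :: "'a set \<Rightarrow> ('a \<times> 'a) set \<Rightarrow> bool" where
  "is_graph V E \<longleftrightarrow> E \<subseteq> V \<times> V \<and> sym E"

definition nbhd :: "('a \<times> 'a) set \<Rightarrow> 'a \<Rightarrow> 'a set" where
  "nbhd E v = {w. (v, w) \<in> E}"

definition no_isolated :: "'a set \<Rightarrow> ('a \<times> 'a) set \<Rightarrow> bool" where
  "no_isolated V E \<longleftrightarrow> (\<forall>v\<in>V. nbhd E v \<noteq> {})"

definition graph_iso :: "'a set \<Rightarrow> ('a \<times> 'a) set \<Rightarrow> 'b set \<Rightarrow> ('b \<times> 'b) set \<Rightarrow> bool" where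
  "graph_iso V E V' E' \<longleftrightarrow> (\<exists>f. bij_betw f V V' \<and>
     (\<forall>v\<in>V. \<forall>w\<in>V. (v, w) \<in> E \<longleftrightarrow> (f v, f w) \<in> E'))"

definition box_complex :: "'a set \<Rightarrow> ('a \<times> 'a) set \<Rightarrow> ('a set \<times> 'a set) set" where
  "box_complex V E = {(\<sigma>, \<tau>). \<sigma> \<subseteq> V \<and> \<tau> \<subseteq> V \<and> \<sigma> \<noteq> {} \<and> \<tau> \<noteq> {} \<and> \<sigma> \<times> \<tau> \<subseteq> E}"

definition box_le :: "('a set \<times> 'a set) \<Rightarrow> ('a set \<times> 'a set) \<Rightarrow> bool" where
  "box_le p q \<longleftrightarrow> fst p \<subseteq> fst q \<and> snd p \<subseteq> snd q"

definition box_inv :: "('a set \<times> 'a set) \<Rightarrow> ('a set \<times> 'a set)" where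
  "box_inv p = (snd p, fst p)"

definition z2_poset_iso ::
  "('a set \<times> 'a set) set \<Rightarrow> ('b set \<times> 'b set) set \<Rightarrow> bool" where
  "z2_poset_iso P Q \<longleftrightarrow> (\<exists>F. bij_betw F P Q \<and>
     (\<forall>x\<in>P. \<forall>y\<in>P. box_le x y \<longleftrightarrow> box_le (F x) (F y)) \<and>
     (\<forall>x\<in>P. F (box_inv x) = box_inv (F x)))"

end

theory Submission
  imports Defs
begin


definition at :: "'a \<times> 'a \<Rightarrow> 'a set \<times> 'a set" where "at e = ({fst e}, {snd e})"
lemma at_inj: "at e1 = at e2 \<Longrightarrow> e1 = e2" by (cases e1; cases e2) (auto simp: at_def)
lemma inj_at: "inj at" by (rule injI) (rule at_inj)

definition Mn :: "('a set \<times> 'a set) set \<Rightarrow> ('a set \<times> 'a set) set" where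
 "Mn P = {x\<in>P. \<forall>y\<in>P. box_le y x \<longrightarrow> y = x}"
definition TT :: "('a set \<times> 'a set) set \<Rightarrow> ('a set \<times> 'a set) \<Rightarrow> ('a set \<times> 'a set) \<Rightarrow> bool" where
 "TT P a1 a2 = (\<exists>y\<in>P. box_le a1 y \<and> box_le a2 y \<and> (\<forall>c\<in>Mn P. box_le c y \<longrightarrow> c = a1 \<or> c = a2))"
definition SS :: "'a\<times>'a \<Rightarrow> 'a\<times>'a \<Rightarrow> bool" where "SS e1 e2 = (fst e1 = fst e2 \<or> snd e1 = snd e2)"

lemma B1: assumes "E \<subseteq> V \<times> V" shows "Mn (box_complex V E) = at ` E"
proof
  show "Mn (box_complex V E) \<subseteq> at ` E"
  proof
    fix x assume x: "x \<in> Mn (box_complex V E)"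
    obtain \<sigma> \<tau> where xs: "x = (\<sigma>,\<tau>)" by (cases x)
    with x have "\<sigma> \<subseteq> V" "\<tau> \<subseteq> V" "\<sigma> \<noteq> {}" "\<tau> \<noteq> {}" "\<sigma> \<times> \<tau> \<subseteq> E" by (auto simp: Mn_def box_complex_def)
    then obtain v w where "v\<in>\<sigma>" "w\<in>\<tau>" by blast
    then have vw: "(v,w) \<in> E" using \<open>\<sigma>\<times>\<tau>\<subseteq>E\<close> by blast
    have "({v},{w}) \<in> box_complex V E" using vw assms by (auto simp: box_complex_def)
    moreover have "box_le ({v},{w}) x" using \<open>v\<in>\<sigma>\<close> \<open>w\<in>\<tau>\<close> xs by (auto simp: box_le_def)
    ultimately have "({v},{w}) = x" using x by (auto simp: Mn_def)
    then show "x \<in> at ` E" using vw by (force simp: at_def)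
  qed
  show "at ` E \<subseteq> Mn (box_complex V E)"
  proof
    fix x assume "x \<in> at ` E"
    then obtain v w where vw: "(v,w)\<in>E" and x: "x = ({v},{w})" by (auto simp: at_def)
    have "x \<in> box_complex V E" using vw assms x by (auto simp: box_complex_def)
    moreover have "\<forall>y\<in>box_complex V E. box_le y x \<longrightarrow> y = x"
      using x by (auto simp: box_le_def box_complex_def subset_singleton_iff)
    ultimately show "x \<in> Mn (box_complex V E)" by (simp add: Mn_def)
  qed
qed

lemma B2: assumes EV: "E \<subseteq> V\<times>V" and e: "e1\<in>E" "e2\<in>E"
  shows "TT (box_complex V E) (at e1) (at e2) \<longleftrightarrow> SS e1 e2"
proof -
  obtain v1 w1 v2 w2 where e1: "e1 = (v1,w1)" and e2: "e2 = (v2,w2)" by (cases e1, cases e2)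
  show ?thesis
  proof
    assume "TT (box_complex V E) (at e1) (at e2)"
    then obtain y where y: "y \<in> box_complex V E" "box_le (at e1) y" "box_le (at e2) y"
      and c: "\<forall>c\<in>Mn (box_complex V E). box_le c y \<longrightarrow> c = at e1 \<or> c = at e2"
      by (auto simp: TT_def)
    obtain \<sigma> \<tau> where ys: "y = (\<sigma>,\<tau>)" by (cases y)
    have "v1 \<in> \<sigma>" "v2 \<in> \<sigma>" "w1 \<in> \<tau>" "w2 \<in> \<tau>" using y ys e1 e2 by (auto simp: box_le_def at_def)
    moreover have "\<sigma> \<times> \<tau> \<subseteq> E" using y ys by (auto simp: box_complex_def)
    ultimately have "(v1,w2) \<in> E" by blast
    then have "at (v1,w2) \<in> Mn (box_complex V E)" using B1[OF EV] by auto
    moreover have "box_le (at (v1,w2)) y" using \<open>v1 \<in> \<sigma>\<close> \<open>w2 \<in> \<tau>\<close> ys by (auto simp: box_le_def at_def)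
    ultimately have "at (v1,w2) = at e1 \<or> at (v1,w2) = at e2" using c by blast
    then show "SS e1 e2" using e1 e2 by (auto simp: SS_def at_def)
  next
    assume s: "SS e1 e2"
    have E1: "(v1,w1) \<in> E" and E2: "(v2,w2)\<in>E" using e e1 e2 by auto
    show "TT (box_complex V E) (at e1) (at e2)"
    proof (cases "v1 = v2")
      case True
      let ?y = "({v1},{w1,w2})"
      have "?y \<in> box_complex V E" using E1 E2 True EV by (auto simp: box_complex_def)
      moreover have "\<forall>c\<in>Mn (box_complex V E). box_le c ?y \<longrightarrow> c = at e1 \<or> c = at e2"
        using B1[OF EV] True e1 e2 by (auto simp: box_le_def at_def)
      ultimately show ?thesis unfolding TT_def using e1 e2 True
        by (intro bexI[of _ ?y]) (auto simp: box_le_def at_def)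
    next
      case False
      then have T: "w1 = w2" using s e1 e2 by (auto simp: SS_def)
      let ?y = "({v1,v2},{w1})"
      have "?y \<in> box_complex V E" using E1 E2 T EV by (auto simp: box_complex_def)
      moreover have "\<forall>c\<in>Mn (box_complex V E). box_le c ?y \<longrightarrow> c = at e1 \<or> c = at e2"
        using B1[OF EV] T e1 e2 by (auto simp: box_le_def at_def)
      ultimately show ?thesis unfolding TT_def using e1 e2 T
        by (intro bexI[of _ ?y]) (auto simp: box_le_def at_def)
    qed
  qed
qed

locale oiso =
  fixes F :: "'a set \<times> 'a set \<Rightarrow> 'b set \<times> 'b set" and P Q
  assumes bij: "bij_betw F P Q" and ord: "\<forall>x\<in>P. \<forall>y\<in>P. box_le x y \<longleftrightarrow> box_le (F x) (F y)"
begin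

lemma FP: "x \<in> P \<Longrightarrow> F x \<in> Q" using bij bij_betwE by blast
lemma Finj: "x \<in> P \<Longrightarrow> y \<in> P \<Longrightarrow> F x = F y \<Longrightarrow> x = y" using bij by (auto simp: bij_betw_def inj_on_def)
lemma Fsurj: "z \<in> Q \<Longrightarrow> \<exists>x\<in>P. F x = z" using bij by (auto simp: bij_betw_def)

lemma G1: assumes "a \<in> Mn P" shows "F a \<in> Mn Q"
proof -
  have a: "a \<in> P" "\<forall>y\<in>P. box_le y a \<longrightarrow> y = a" using assms by (auto simp: Mn_def)
  have "\<forall>z\<in>Q. box_le z (F a) \<longrightarrow> z = F a"
  proof (intro ballI impI)
    fix z assume "z \<in> Q" "box_le z (F a)"
    then obtain y where "y \<in> P" "F y = z" using Fsurj by blast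
    then show "z = F a" using a ord \<open>box_le z (F a)\<close> by auto
  qed
  then show ?thesis using FP a by (auto simp: Mn_def)
qed

lemma G2: assumes "b \<in> Mn Q" shows "\<exists>a\<in>Mn P. F a = b"
proof -
  have "b \<in> Q" using assms by (simp add: Mn_def)
  then obtain a where a: "a \<in> P" "F a = b" using Fsurj by blast
  have "\<forall>y\<in>P. box_le y a \<longrightarrow> y = a"
  proof (intro ballI impI)
    fix y assume "y \<in> P" "box_le y a"
    then have "box_le (F y) b" using ord a by auto
    then have "F y = b" using assms FP \<open>y\<in>P\<close> by (auto simp: Mn_def)
    then show "y = a" using Finj a \<open>y\<in>P\<close> by auto
  qed
  then have "a \<in> Mn P" using a by (simp add: Mn_def)
  then show ?thesis using a by blast
qed

lemma G3: assumes "a1 \<in> P" "a2 \<in> P" shows "TT P a1 a2 \<longleftrightarrow> TT Q (F a1) (F a2)"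
proof
  assume "TT P a1 a2"
  then obtain y where y: "y\<in>P" "box_le a1 y" "box_le a2 y" and c: "\<forall>c\<in>Mn P. box_le c y \<longrightarrow> c = a1 \<or> c = a2"
    by (auto simp: TT_def)
  have "\<forall>c\<in>Mn Q. box_le c (F y) \<longrightarrow> c = F a1 \<or> c = F a2"
  proof (intro ballI impI)
    fix c assume "c \<in> Mn Q" "box_le c (F y)"
    then obtain c0 where "c0 \<in> Mn P" "F c0 = c" using G2 by blast
    then have "c0 \<in> P" by (auto simp: Mn_def)
    then have "box_le c0 y" using ord y \<open>box_le c (F y)\<close> \<open>F c0 = c\<close> by auto
    then show "c = F a1 \<or> c = F a2" using c \<open>c0 \<in> Mn P\<close> \<open>F c0 = c\<close> by auto
  qed
  then show "TT Q (F a1) (F a2)" unfolding TT_def using y ord assms FP by (intro bexI[of _ "F y"]) auto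
next
  assume "TT Q (F a1) (F a2)"
  then obtain y' where y': "y'\<in>Q" "box_le (F a1) y'" "box_le (F a2) y'" and c: "\<forall>c\<in>Mn Q. box_le c y' \<longrightarrow> c = F a1 \<or> c = F a2"
    by (auto simp: TT_def)
  obtain y where y: "y \<in> P" "F y = y'" using Fsurj y' by blast
  have "\<forall>c\<in>Mn P. box_le c y \<longrightarrow> c = a1 \<or> c = a2"
  proof (intro ballI impI)
    fix c assume "c \<in> Mn P" "box_le c y"
    then have "c \<in> P" by (auto simp: Mn_def)
    then have "box_le (F c) y'" using ord y \<open>box_le c y\<close> by auto
    then have "F c = F a1 \<or> F c = F a2" using c G1[OF \<open>c \<in> Mn P\<close>] by auto
    then show "c = a1 \<or> c = a2" using Finj[OF \<open>c\<in>P\<close> assms(1)] Finj[OF \<open>c\<in>P\<close> assms(2)] by blast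
  qed
  then show "TT P a1 a2" unfolding TT_def using y y' ord assms by (intro bexI[of _ y]) auto
qed

end


definition big :: "('a\<times>'a) set \<Rightarrow> 'a \<Rightarrow> bool" where
  "big E v = (\<exists>w1 w2. (v,w1)\<in>E \<and> (v,w2)\<in>E \<and> w1\<noteq>w2)"
definition PP :: "('a\<times>'a) set \<Rightarrow> ('a\<times>'a \<Rightarrow> 'b\<times>'b) \<Rightarrow> 'a \<Rightarrow> bool" where
  "PP E \<phi> v = (\<forall>w1 w2. (v,w1)\<in>E \<longrightarrow> (v,w2)\<in>E \<longrightarrow> fst (\<phi> (v,w1)) = fst (\<phi> (v,w2)))"
definition QQ :: "('a\<times>'a) set \<Rightarrow> ('a\<times>'a \<Rightarrow> 'b\<times>'b) \<Rightarrow> 'a \<Rightarrow> bool" where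
  "QQ E \<phi> v = (\<forall>w1 w2. (v,w1)\<in>E \<longrightarrow> (v,w2)\<in>E \<longrightarrow> snd (\<phi> (v,w1)) = snd (\<phi> (v,w2)))"
definition mm :: "('a\<times>'a) set \<Rightarrow> ('a\<times>'a \<Rightarrow> 'b\<times>'b) \<Rightarrow> 'a \<Rightarrow> bool" where
  "mm E \<phi> v = (if big E v then PP E \<phi> v else (\<forall>w. (v,w)\<in>E \<longrightarrow> big E w \<longrightarrow> PP E \<phi> w))"
definition fm :: "('a\<times>'a) set \<Rightarrow> ('a\<times>'a \<Rightarrow> 'b\<times>'b) \<Rightarrow> 'a \<Rightarrow> 'b" where
  "fm E \<phi> v = (let w = (SOME w. (v,w)\<in>E) in if mm E \<phi> v then fst (\<phi> (v,w)) else snd (\<phi> (v,w)))"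

locale lg =
  fixes E :: "('a\<times>'a) set" and E' :: "('b\<times>'b) set" and \<phi> :: "'a\<times>'a \<Rightarrow> 'b\<times>'b"
  assumes symE: "sym E" and symE': "sym E'"
  and maps: "\<And>e. e\<in>E \<Longrightarrow> \<phi> e \<in> E'"
  and inj: "inj_on \<phi> E"
  and surj: "\<phi> ` E = E'"
  and swp: "\<And>v w. (v,w)\<in>E \<Longrightarrow> \<phi> (w,v) = prod.swap (\<phi> (v,w))"
  and Spres: "\<And>e1 e2. e1\<in>E \<Longrightarrow> e2\<in>E \<Longrightarrow> SS (\<phi> e1) (\<phi> e2) \<longleftrightarrow> SS e1 e2"
begin

lemma sE: "(v,w)\<in>E \<Longrightarrow> (w,v)\<in>E" using symE by (auto simp: sym_def)
lemma sw1: "(v,w)\<in>E \<Longrightarrow> fst (\<phi> (w,v)) = snd (\<phi> (v,w))" using swp by simp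
lemma sw2: "(v,w)\<in>E \<Longrightarrow> snd (\<phi> (w,v)) = fst (\<phi> (v,w))" using swp by simp
lemma S': "e1\<in>E \<Longrightarrow> e2\<in>E \<Longrightarrow> (fst (\<phi> e1) = fst (\<phi> e2) \<or> snd (\<phi> e1) = snd (\<phi> e2)) \<longleftrightarrow> (fst e1 = fst e2 \<or> snd e1 = snd e2)"
  using Spres by (simp add: SS_def)

lemma L1: "PP E \<phi> v \<or> QQ E \<phi> v"
proof (rule ccontr)
  assume n: "\<not> (PP E \<phi> v \<or> QQ E \<phi> v)"
  then obtain w1 w2 where w: "(v,w1)\<in>E" "(v,w2)\<in>E" "fst (\<phi> (v,w1)) \<noteq> fst (\<phi> (v,w2))"
    by (auto simp: PP_def)
  then have c: "snd (\<phi> (v,w1)) = snd (\<phi> (v,w2))" using S'[of "(v,w1)" "(v,w2)"] by simp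
  have "\<forall>w. (v,w)\<in>E \<longrightarrow> snd (\<phi> (v,w)) = snd (\<phi> (v,w1))"
  proof (intro allI impI)
    fix w assume "(v,w)\<in>E"
    have a1: "fst (\<phi> (v,w)) = fst (\<phi> (v,w1)) \<or> snd (\<phi> (v,w)) = snd (\<phi> (v,w1))"
      using S'[of "(v,w)" "(v,w1)"] \<open>(v,w)\<in>E\<close> w(1) by simp
    have a2: "fst (\<phi> (v,w)) = fst (\<phi> (v,w2)) \<or> snd (\<phi> (v,w)) = snd (\<phi> (v,w2))"
      using S'[of "(v,w)" "(v,w2)"] \<open>(v,w)\<in>E\<close> w(2) by simp
    show "snd (\<phi> (v,w)) = snd (\<phi> (v,w1))"
      using a1 a2 w(3) c by metis
  qed
  then have "QQ E \<phi> v" by (auto simp: QQ_def)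
  with n show False by simp
qed

lemma notboth: "big E v \<Longrightarrow> PP E \<phi> v \<Longrightarrow> QQ E \<phi> v \<Longrightarrow> False"
proof -
  assume "big E v" "PP E \<phi> v" "QQ E \<phi> v"
  then obtain w1 w2 where w: "(v,w1)\<in>E" "(v,w2)\<in>E" "w1\<noteq>w2" unfolding big_def by blast
  have "fst (\<phi> (v,w1)) = fst (\<phi> (v,w2))" using \<open>PP E \<phi> v\<close> w unfolding PP_def by blast
  moreover have "snd (\<phi> (v,w1)) = snd (\<phi> (v,w2))" using \<open>QQ E \<phi> v\<close> w unfolding QQ_def by blast
  ultimately have "\<phi> (v,w1) = \<phi> (v,w2)" by (rule prod_eqI)
  then have "(v,w1) = (v,w2)" using inj_onD[OF inj _ w(1) w(2)] by blast
  then show False using w(3) by simp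
qed

lemma other: "big E v \<Longrightarrow> \<exists>w'. (v,w')\<in>E \<and> w' \<noteq> w"
  by (auto simp: big_def)

lemma L3: assumes b: "big E v" and p: "PP E \<phi> v" and vw: "(v,w)\<in>E" shows "PP E \<phi> w"
proof -
  obtain w' where w': "(v,w')\<in>E" "w'\<noteq>w" using other[OF b] by blast
  have key: "fst (\<phi> (w,z)) = fst (\<phi> (w,v))" if wz: "(w,z)\<in>E" for z
  proof (cases "z = v")
    case True then show ?thesis by simp
  next
    case False
    have zw: "(z,w)\<in>E" using sE wz by blast
    have AB: "fst (\<phi> (v,w')) = fst (\<phi> (v,w))" using p w'(1) vw unfolding PP_def by blast
    have BC: "fst (\<phi> (v,w)) = fst (\<phi> (z,w)) \<or> snd (\<phi> (v,w)) = snd (\<phi> (z,w))"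
      using S'[of "(v,w)" "(z,w)"] vw zw by simp
    have AC: "\<not> (fst (\<phi> (v,w')) = fst (\<phi> (z,w)) \<or> snd (\<phi> (v,w')) = snd (\<phi> (z,w)))"
      using S'[of "(v,w')" "(z,w)"] w' zw False by simp
    have "snd (\<phi> (z,w)) = snd (\<phi> (v,w))" using AB BC AC by metis
    then show ?thesis using sw1[OF zw] sw1[OF vw] by metis
  qed
  show ?thesis unfolding PP_def
  proof (intro allI impI)
    fix z1 z2 assume "(w,z1)\<in>E" "(w,z2)\<in>E"
    then show "fst (\<phi> (w,z1)) = fst (\<phi> (w,z2))" using key by simp
  qed
qed

lemma L3Q: assumes b: "big E v" and p: "QQ E \<phi> v" and vw: "(v,w)\<in>E" shows "QQ E \<phi> w"
proof -
  obtain w' where w': "(v,w')\<in>E" "w'\<noteq>w" using other[OF b] by blast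
  have key: "snd (\<phi> (w,z)) = snd (\<phi> (w,v))" if wz: "(w,z)\<in>E" for z
  proof (cases "z = v")
    case True then show ?thesis by simp
  next
    case False
    have zw: "(z,w)\<in>E" using sE wz by blast
    have AB: "snd (\<phi> (v,w')) = snd (\<phi> (v,w))" using p w'(1) vw unfolding QQ_def by blast
    have BC: "fst (\<phi> (v,w)) = fst (\<phi> (z,w)) \<or> snd (\<phi> (v,w)) = snd (\<phi> (z,w))"
      using S'[of "(v,w)" "(z,w)"] vw zw by simp
    have AC: "\<not> (fst (\<phi> (v,w')) = fst (\<phi> (z,w)) \<or> snd (\<phi> (v,w')) = snd (\<phi> (z,w)))"
      using S'[of "(v,w')" "(z,w)"] w' zw False by simp
    have "fst (\<phi> (z,w)) = fst (\<phi> (v,w))" using AB BC AC by metis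
    then show ?thesis using sw2[OF zw] sw2[OF vw] by metis
  qed
  show ?thesis unfolding QQ_def
  proof (intro allI impI)
    fix z1 z2 assume "(w,z1)\<in>E" "(w,z2)\<in>E"
    then show "snd (\<phi> (w,z1)) = snd (\<phi> (w,z2))" using key by simp
  qed
qed

lemma nb: "\<not> big E v \<Longrightarrow> (v,w1)\<in>E \<Longrightarrow> (v,w2)\<in>E \<Longrightarrow> w1 = w2"
  by (auto simp: big_def)

lemma nbPQ: "\<not> big E v \<Longrightarrow> PP E \<phi> v \<and> QQ E \<phi> v"
  by (auto simp: PP_def QQ_def big_def)

lemma Lm1: "mm E \<phi> v \<Longrightarrow> PP E \<phi> v"
proof (cases "big E v")
  case True then show "mm E \<phi> v \<Longrightarrow> PP E \<phi> v" by (simp add: mm_def)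
next
  case False then show ?thesis using nbPQ[OF False] by blast
qed
lemma Lm2: "\<not> mm E \<phi> v \<Longrightarrow> QQ E \<phi> v"
proof (cases "big E v")
  case True then show "\<not> mm E \<phi> v \<Longrightarrow> QQ E \<phi> v" using L1[of v] by (simp add: mm_def)
next
  case False then show ?thesis using nbPQ[OF False] by blast
qed

lemma Lcons: assumes vw: "(v,w)\<in>E" shows "mm E \<phi> v = mm E \<phi> w"
proof (cases "big E v")
  case bv: True
  show ?thesis
  proof (cases "big E w")
    case bw: True
    have "PP E \<phi> v \<longleftrightarrow> PP E \<phi> w"
    proof
      assume "PP E \<phi> v" then show "PP E \<phi> w" using L3 bv vw by blast
    next
      assume "PP E \<phi> w" then show "PP E \<phi> v" using L3 bw sE[OF vw] by blast
    qed
    then show ?thesis using bv bw by (simp add: mm_def)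
  next
    case bw: False
    have "(\<forall>z. (w,z)\<in>E \<longrightarrow> big E z \<longrightarrow> PP E \<phi> z) \<longleftrightarrow> PP E \<phi> v"
      using nb[OF bw] sE[OF vw] bv by blast
    then show ?thesis using bv bw by (simp add: mm_def)
  qed
next
  case bv: False
  show ?thesis
  proof (cases "big E w")
    case bw: True
    have "(\<forall>z. (v,z)\<in>E \<longrightarrow> big E z \<longrightarrow> PP E \<phi> z) \<longleftrightarrow> PP E \<phi> w"
      using nb[OF bv] vw bw by blast
    then show ?thesis using bv bw by (simp add: mm_def)
  next
    case bw: False
    have "(\<forall>z. (v,z)\<in>E \<longrightarrow> big E z \<longrightarrow> PP E \<phi> z)" using nb[OF bv] vw bw by blast
    moreover have "(\<forall>z. (w,z)\<in>E \<longrightarrow> big E z \<longrightarrow> PP E \<phi> z)" using nb[OF bw] sE[OF vw] bv by blast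
    ultimately show ?thesis using bv bw by (simp add: mm_def)
  qed
qed

lemma Lf1: assumes "(v,w)\<in>E" "mm E \<phi> v" shows "fm E \<phi> v = fst (\<phi> (v,w))"
proof -
  have s: "(v, SOME w. (v,w)\<in>E) \<in> E" using assms(1) by (rule someI)
  have "fst (\<phi> (v, SOME w. (v,w)\<in>E)) = fst (\<phi> (v,w))"
    using Lm1[OF assms(2)] s assms(1) unfolding PP_def by blast
  then show ?thesis using assms(2) unfolding fm_def Let_def by simp
qed
lemma Lf2: assumes "(v,w)\<in>E" "\<not> mm E \<phi> v" shows "fm E \<phi> v = snd (\<phi> (v,w))"
proof -
  have s: "(v, SOME w. (v,w)\<in>E) \<in> E" using assms(1) by (rule someI)
  have "snd (\<phi> (v, SOME w. (v,w)\<in>E)) = snd (\<phi> (v,w))"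
    using Lm2[OF assms(2)] s assms(1) unfolding QQ_def by blast
  then show ?thesis using assms(2) unfolding fm_def Let_def by simp
qed

lemma Ca: assumes vw: "(v,w)\<in>E"
  shows "\<phi> (v,w) = (fm E \<phi> v, fm E \<phi> w) \<or> \<phi> (v,w) = (fm E \<phi> w, fm E \<phi> v)"
proof (cases "mm E \<phi> v")
  case True
  then have "mm E \<phi> w" using Lcons[OF vw] by simp
  have "fm E \<phi> v = fst (\<phi> (v,w))" "fm E \<phi> w = snd (\<phi> (v,w))"
    using Lf1[OF vw True] Lf1[OF sE[OF vw] \<open>mm E \<phi> w\<close>] sw1[OF vw] by simp_all
  then show ?thesis by (metis prod.collapse)
next
  case False
  then have "\<not> mm E \<phi> w" using Lcons[OF vw] by simp
  have "fm E \<phi> v = snd (\<phi> (v,w))" "fm E \<phi> w = fst (\<phi> (v,w))"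
    using Lf2[OF vw False] Lf2[OF sE[OF vw] \<open>\<not> mm E \<phi> w\<close>] sw2[OF vw] by simp_all
  then show ?thesis by (metis prod.collapse)
qed

lemma Cb: assumes vw: "(v,w)\<in>E" and "\<not> big E v" "\<not> big E w"
  shows "\<phi> (v,w) = (fm E \<phi> v, fm E \<phi> w)"
proof -
  have "\<forall>z. (v,z)\<in>E \<longrightarrow> big E z \<longrightarrow> PP E \<phi> z"
  proof (intro allI impI)
    fix z assume "(v,z)\<in>E" "big E z"
    then have "z = w" using nb[OF assms(2)] vw by blast
    then show "PP E \<phi> z" using \<open>big E z\<close> assms(3) by simp
  qed
  then have "mm E \<phi> v" using assms(2) by (simp add: mm_def)
  then have "mm E \<phi> w" using Lcons[OF vw] by simp
  have "fm E \<phi> v = fst (\<phi> (v,w))" "fm E \<phi> w = snd (\<phi> (v,w))"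
    using Lf1[OF vw \<open>mm E \<phi> v\<close>] Lf1[OF sE[OF vw] \<open>mm E \<phi> w\<close>] sw1[OF vw] by simp_all
  then show ?thesis by (metis prod.collapse)
qed

lemma Deg: assumes vw: "(v,w)\<in>E" and bv: "\<not> big E v" and bw: "\<not> big E w"
  shows "\<not> big E' (fst (\<phi> (v,w)))"
proof -
  let ?a = "fst (\<phi> (v,w))" and ?b = "snd (\<phi> (v,w))"
  have "z = ?b" if az: "(?a,z)\<in>E'" for z
  proof -
    obtain e where e: "e\<in>E" "\<phi> e = (?a,z)" using az surj by force
    have "SS e (v,w)" using Spres[OF e(1) vw] e(2) by (simp add: SS_def)
    obtain x y where exy: "e = (x,y)" by (cases e)
    have "x = v \<or> y = w" using \<open>SS e (v,w)\<close> exy by (simp add: SS_def)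
    then have "e = (v,w)"
    proof
      assume "x = v" then show ?thesis using nb[OF bv, of y w] e(1) exy vw by simp
    next
      assume "y = w" then have "(w,x)\<in>E" using sE e(1) exy by simp
      then show ?thesis using nb[OF bw, of x v] sE[OF vw] exy \<open>y = w\<close> by simp
    qed
    then show ?thesis using e(2) by (metis snd_conv)
  qed
  then show ?thesis by (auto simp: big_def)
qed

end


lemma lg_inv: assumes "lg E E' \<phi>" shows "lg E' E (inv_into E \<phi>)"
proof -
  interpret lg E E' \<phi> by fact
  let ?\<psi> = "inv_into E \<phi>"
  have pp: "\<And>e. e\<in>E \<Longrightarrow> ?\<psi> (\<phi> e) = e" using inj by (simp add: inv_into_f_f)
  have qq: "\<And>e'. e'\<in>E' \<Longrightarrow> \<phi> (?\<psi> e') = e'" using surj by (simp add: f_inv_into_f)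
  have in1: "\<And>e'. e'\<in>E' \<Longrightarrow> ?\<psi> e' \<in> E" using surj by (metis inv_into_into)
  show ?thesis
  proof
    show "sym E'" by (rule symE')
    show "sym E" by (rule symE)
    show "\<And>e. e \<in> E' \<Longrightarrow> ?\<psi> e \<in> E" by (rule in1)
    show "inj_on ?\<psi> E'" using surj by (simp add: inj_on_inv_into)
    show "?\<psi> ` E' = E" using surj inj by (simp add: bij_betw_def bij_betw_inv_into[THEN bij_betw_imp_surj_on])
    show "?\<psi> (w, v) = prod.swap (?\<psi> (v, w))" if "(v, w) \<in> E'" for v w
    proof -
      have "(v,w) \<in> \<phi> ` E" using that surj by simp
      then obtain e where e: "e \<in> E" "\<phi> e = (v,w)" by (auto simp del: surj)
      obtain a b where ab: "e = (a,b)" by (cases e)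
      have "\<phi> (b,a) = (w,v)" using swp[of a b] e ab by simp
      moreover have "(b,a)\<in>E" using sE e ab by simp
      ultimately have "?\<psi> (w,v) = (b,a)" using pp by metis
      moreover have "?\<psi> (v,w) = (a,b)" using pp e ab by metis
      ultimately show ?thesis by simp
    qed
    show "SS (?\<psi> e1) (?\<psi> e2) = SS e1 e2" if "e1 \<in> E'" "e2 \<in> E'" for e1 e2
      using Spres[OF in1[OF that(1)] in1[OF that(2)]] qq that by simp
  qed
qed

lemma D: assumes l1: "lg E E' \<phi>" and l2: "lg E' E \<psi>" and pp: "\<forall>e\<in>E. \<psi> (\<phi> e) = e"
  and vw0: "(v,w0)\<in>E"
  shows "fm E' \<psi> (fm E \<phi> v) = v"
proof -
  interpret A: lg E E' \<phi> by (rule l1)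
  interpret B: lg E' E \<psi> by (rule l2)
  let ?f = "fm E \<phi>" and ?g = "fm E' \<psi>"
  have K: "(?g (?f v), ?g (?f w)) = (v,w) \<or> (?g (?f v), ?g (?f w)) = (w,v)" if vw: "(v,w)\<in>E" for v w
  proof -
    have ps: "\<psi> (\<phi> (v,w)) = (v,w)" using pp vw by blast
    have inE: "\<phi> (v,w) \<in> E'" using A.maps vw by blast
    from A.Ca[OF vw] show ?thesis
    proof
      assume h: "\<phi> (v, w) = (?f v, ?f w)"
      then show ?thesis using B.Ca[of "?f v" "?f w"] inE ps by auto
    next
      assume h: "\<phi> (v, w) = (?f w, ?f v)"
      then show ?thesis using B.Ca[of "?f w" "?f v"] inE ps by auto
    qed
  qed
  have bigc: "?g (?f u) = u" if bu: "big E u" for u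
  proof -
    obtain w1 w2 where w: "(u,w1)\<in>E" "(u,w2)\<in>E" "w1\<noteq>w2" using bu unfolding big_def by blast
    show ?thesis using K[OF w(1)] K[OF w(2)] w(3) by auto
  qed
  show ?thesis
  proof (cases "big E v")
    case True then show ?thesis by (rule bigc)
  next
    case bv: False
    show ?thesis
    proof (cases "big E w0")
      case True
      then have "?g (?f w0) = w0" by (rule bigc)
      then show ?thesis using K[OF vw0] by auto
    next
      case bw: False
      have e: "\<phi> (v,w0) = (?f v, ?f w0)" by (rule A.Cb[OF vw0 bv bw])
      have inE: "(?f v, ?f w0) \<in> E'" using A.maps[OF vw0] e by simp
      have d1: "\<not> big E' (?f v)" using A.Deg[OF vw0 bv bw] e by simp
      have d2: "\<not> big E' (?f w0)" using A.Deg[OF A.sE[OF vw0] bw bv] A.swp[OF vw0] e by simp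
      have "\<psi> (?f v, ?f w0) = (?g (?f v), ?g (?f w0))" by (rule B.Cb[OF inE d1 d2])
      moreover have "\<psi> (?f v, ?f w0) = (v,w0)" using pp vw0 e by metis
      ultimately show ?thesis by simp
    qed
  qed
qed

lemma step1:
  assumes gE: "is_graph V E" and gE': "is_graph V' E'"
    and Fb: "bij_betw F (box_complex V E) (box_complex V' E')"
    and Fo: "\<forall>x\<in>box_complex V E. \<forall>y\<in>box_complex V E. box_le x y \<longleftrightarrow> box_le (F x) (F y)"
    and Fi: "\<forall>x\<in>box_complex V E. F (box_inv x) = box_inv (F x)"
  shows "lg E E' (\<lambda>e. inv_into E' at (F (at e)))"
proof -
  let ?P = "box_complex V E" and ?Q = "box_complex V' E'"
  let ?\<phi> = "\<lambda>e. inv_into E' at (F (at e))"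
  interpret O: oiso F ?P ?Q using Fb Fo by unfold_locales
  have EV: "E \<subseteq> V \<times> V" and sE: "sym E" using gE by (auto simp: is_graph_def)
  have EV': "E' \<subseteq> V' \<times> V'" and sE': "sym E'" using gE' by (auto simp: is_graph_def)
  have atP: "at e \<in> Mn ?P" if "e \<in> E" for e using B1[OF EV] that by blast
  have atP': "at e \<in> ?P" if "e \<in> E" for e using atP[OF that] by (simp add: Mn_def)
  have key: "?\<phi> e \<in> E' \<and> at (?\<phi> e) = F (at e)" if "e \<in> E" for e
  proof -
    have "F (at e) \<in> at ` E'" using O.G1[OF atP[OF that]] B1[OF EV'] by simp
    then show ?thesis by (simp add: inv_into_into f_inv_into_f)
  qed
  show ?thesis
  proof
    show "sym E" "sym E'" by (fact sE, fact sE')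
    show "\<And>e. e \<in> E \<Longrightarrow> ?\<phi> e \<in> E'" using key by blast
    show "inj_on ?\<phi> E"
    proof (rule inj_onI)
      fix x y assume "x \<in> E" "y \<in> E" "?\<phi> x = ?\<phi> y"
      then have "F (at x) = F (at y)" using key by metis
      then have "at x = at y" using O.Finj atP' \<open>x\<in>E\<close> \<open>y\<in>E\<close> by blast
      then show "x = y" by (rule at_inj)
    qed
    show "?\<phi> ` E = E'"
    proof
      show "?\<phi> ` E \<subseteq> E'" using key by blast
      show "E' \<subseteq> ?\<phi> ` E"
      proof
        fix e' assume "e' \<in> E'"
        then have "at e' \<in> Mn ?Q" using B1[OF EV'] by blast
        then obtain a where a: "a \<in> Mn ?P" "F a = at e'" using O.G2 by blast
        then obtain e where e: "e \<in> E" "a = at e" using B1[OF EV] by blast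
        then have "at (?\<phi> e) = at e'" using key a by metis
        then have "?\<phi> e = e'" by (rule at_inj)
        then show "e' \<in> ?\<phi> ` E" using e by blast
      qed
    qed
    show "?\<phi> (w, v) = prod.swap (?\<phi> (v, w))" if vw: "(v, w) \<in> E" for v w
    proof -
      have wv: "(w,v)\<in>E" using sE vw by (auto simp: sym_def)
      have "at (w,v) = box_inv (at (v,w))" by (simp add: at_def box_inv_def)
      then have "F (at (w,v)) = box_inv (F (at (v,w)))" using Fi atP'[OF vw] by simp
      then have "at (?\<phi> (w,v)) = box_inv (at (?\<phi> (v,w)))" using key vw wv by metis
      then have "at (?\<phi> (w,v)) = at (prod.swap (?\<phi> (v,w)))"
        by (simp add: at_def box_inv_def)
      then show ?thesis by (rule at_inj)
    qed
    show "SS (?\<phi> e1) (?\<phi> e2) = SS e1 e2" if "e1 \<in> E" "e2 \<in> E" for e1 e2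
    proof -
      have "SS (?\<phi> e1) (?\<phi> e2) = TT ?Q (at (?\<phi> e1)) (at (?\<phi> e2))"
        using B2[OF EV', of "?\<phi> e1" "?\<phi> e2"] key that by simp
      also have "\<dots> = TT ?Q (F (at e1)) (F (at e2))" using key that by simp
      also have "\<dots> = TT ?P (at e1) (at e2)" using O.G3 atP' that by simp
      also have "\<dots> = SS e1 e2" using B2[OF EV] that by simp
      finally show ?thesis .
    qed
  qed
qed



lemma inj_sub: "inj_on f C \<Longrightarrow> A \<subseteq> C \<Longrightarrow> B \<subseteq> C \<Longrightarrow> f ` A \<subseteq> f ` B \<longleftrightarrow> A \<subseteq> B"
  by (auto simp: inj_on_def) blast

lemma fwd:
  assumes gE: "is_graph V E" and gE': "is_graph V' E'" and iso: "graph_iso V E V' E'"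
  shows "z2_poset_iso (box_complex V E) (box_complex V' E')"
proof -
  obtain f where bij: "bij_betw f V V'" and ed: "\<forall>v\<in>V. \<forall>w\<in>V. (v, w) \<in> E \<longleftrightarrow> (f v, f w) \<in> E'"
    using iso by (auto simp: graph_iso_def)
  have EV: "E \<subseteq> V \<times> V" using gE by (auto simp: is_graph_def)
  have EV': "E' \<subseteq> V' \<times> V'" using gE' by (auto simp: is_graph_def)
  have inj: "inj_on f V" and im: "f ` V = V'" using bij by (auto simp: bij_betw_def)
  define F where "F x = (f ` fst x, f ` snd x)" for x :: "'a set \<times> 'a set"
  let ?P = "box_complex V E" and ?Q = "box_complex V' E'"
  have mem: "F x \<in> ?Q" if "x \<in> ?P" for x
  proof -
    obtain \<sigma> \<tau> where x: "x = (\<sigma>,\<tau>)" by (cases x)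
    have h: "\<sigma> \<subseteq> V" "\<tau> \<subseteq> V" "\<sigma> \<noteq> {}" "\<tau> \<noteq> {}" "\<sigma> \<times> \<tau> \<subseteq> E" using that x by (auto simp: box_complex_def)
    have "f ` \<sigma> \<times> f ` \<tau> \<subseteq> E'"
    proof
      fix p assume "p \<in> f ` \<sigma> \<times> f ` \<tau>"
      then obtain a b where "a \<in> \<sigma>" "b \<in> \<tau>" "p = (f a, f b)" by auto
      then show "p \<in> E'" using h ed by blast
    qed
    then show ?thesis using h im x by (auto simp: F_def box_complex_def)
  qed
  have bijF: "bij_betw F ?P ?Q"
  proof (rule bij_betw_imageI)
    show "inj_on F ?P"
    proof (rule inj_onI)
      fix x y assume xy: "x \<in> ?P" "y \<in> ?P" "F x = F y"
      then have "fst x \<subseteq> V" "snd x \<subseteq> V" "fst y \<subseteq> V" "snd y \<subseteq> V" by (auto simp: box_complex_def)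
      moreover have "f ` fst x = f ` fst y" "f ` snd x = f ` snd y" using xy(3) by (auto simp: F_def)
      ultimately show "x = y" using inj_on_image_eq_iff[OF inj] by (metis prod_eqI)
    qed
    show "F ` ?P = ?Q"
    proof
      show "F ` ?P \<subseteq> ?Q" using mem by blast
      show "?Q \<subseteq> F ` ?P"
      proof
        fix y assume y: "y \<in> ?Q"
        obtain \<sigma>' \<tau>' where ys: "y = (\<sigma>',\<tau>')" by (cases y)
        have h: "\<sigma>' \<subseteq> V'" "\<tau>' \<subseteq> V'" "\<sigma>' \<noteq> {}" "\<tau>' \<noteq> {}" "\<sigma>' \<times> \<tau>' \<subseteq> E'" using y ys by (auto simp: box_complex_def)
        let ?g = "inv_into V f"
        have c1: "f ` (?g ` \<sigma>') = \<sigma>'" "f ` (?g ` \<tau>') = \<tau>'" using image_inv_into_cancel[OF im] h by auto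
        have s1: "?g ` \<sigma>' \<subseteq> V" "?g ` \<tau>' \<subseteq> V" using h im by (auto intro: inv_into_into)
        have "?g ` \<sigma>' \<times> ?g ` \<tau>' \<subseteq> E"
        proof
          fix p assume "p \<in> ?g ` \<sigma>' \<times> ?g ` \<tau>'"
          then obtain a b where ab: "a \<in> \<sigma>'" "b \<in> \<tau>'" "p = (?g a, ?g b)" by auto
          have "a \<in> V'" "b \<in> V'" using ab h by auto
          then have "f (?g a) = a" "f (?g b) = b" "?g a \<in> V" "?g b \<in> V" using im by (auto simp: f_inv_into_f inv_into_into)
          then show "p \<in> E" using ed ab h by auto
        qed
        then have "(?g ` \<sigma>', ?g ` \<tau>') \<in> ?P" using s1 h by (auto simp: box_complex_def)
        moreover have "F (?g ` \<sigma>', ?g ` \<tau>') = y" using c1 ys by (simp add: F_def)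
        ultimately show "y \<in> F ` ?P" by blast
      qed
    qed
  qed
  have ord: "\<forall>x\<in>?P. \<forall>y\<in>?P. box_le x y \<longleftrightarrow> box_le (F x) (F y)"
  proof (intro ballI)
    fix x y assume "x \<in> ?P" "y \<in> ?P"
    then have "fst x \<subseteq> V" "snd x \<subseteq> V" "fst y \<subseteq> V" "snd y \<subseteq> V" by (auto simp: box_complex_def)
    then show "box_le x y \<longleftrightarrow> box_le (F x) (F y)"
      using inj_sub[OF inj] by (simp add: box_le_def F_def)
  qed
  have inv: "\<forall>x\<in>?P. F (box_inv x) = box_inv (F x)" by (simp add: F_def box_inv_def)
  show ?thesis unfolding z2_poset_iso_def using bijF ord inv by blast
qed

lemma bwd:
  assumes gE: "is_graph V E" and nE: "no_isolated V E"
    and gE': "is_graph V' E'" and nE': "no_isolated V' E'"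
    and iso: "z2_poset_iso (box_complex V E) (box_complex V' E')"
  shows "graph_iso V E V' E'"
proof -
  obtain F where Fb: "bij_betw F (box_complex V E) (box_complex V' E')"
    and Fo: "\<forall>x\<in>box_complex V E. \<forall>y\<in>box_complex V E. box_le x y \<longleftrightarrow> box_le (F x) (F y)"
    and Fi: "\<forall>x\<in>box_complex V E. F (box_inv x) = box_inv (F x)"
    using iso by (auto simp: z2_poset_iso_def)
  define \<phi> where "\<phi> = (\<lambda>e. inv_into E' at (F (at e)))"
  have l1: "lg E E' \<phi>" unfolding \<phi>_def by (rule step1[OF gE gE' Fb Fo Fi])
  define \<psi> where "\<psi> = inv_into E \<phi>"
  have l2: "lg E' E \<psi>" unfolding \<psi>_def by (rule lg_inv[OF l1])
  interpret A: lg E E' \<phi> by (rule l1)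
  interpret B: lg E' E \<psi> by (rule l2)
  have pp: "\<forall>e\<in>E. \<psi> (\<phi> e) = e" using A.inj by (simp add: \<psi>_def inv_into_f_f)
  have qq: "\<forall>e\<in>E'. \<phi> (\<psi> e) = e" using A.surj by (simp add: \<psi>_def f_inv_into_f)
  have EV: "E \<subseteq> V \<times> V" using gE by (auto simp: is_graph_def)
  have EV': "E' \<subseteq> V' \<times> V'" using gE' by (auto simp: is_graph_def)
  have nb: "\<exists>w. (v,w)\<in>E" if "v \<in> V" for v using nE that by (auto simp: no_isolated_def nbhd_def)
  have nb': "\<exists>w. (v,w)\<in>E'" if "v \<in> V'" for v using nE' that by (auto simp: no_isolated_def nbhd_def)
  let ?f = "fm E \<phi>" and ?g = "fm E' \<psi>"
  have gf: "?g (?f v) = v" if vV: "v \<in> V" for v using nb[OF vV] D[OF l1 l2 pp] by blast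
  have fg: "?f (?g v) = v" if vV: "v \<in> V'" for v using nb'[OF vV] D[OF l2 l1 qq] by blast
  have fV: "?f v \<in> V'" if vV: "v \<in> V" for v
  proof -
    obtain w where vw: "(v,w)\<in>E" using nb[OF vV] by blast
    then have "\<phi> (v,w) \<in> E'" by (rule A.maps)
    then show ?thesis using A.Ca[OF vw] EV' by auto
  qed
  have gV: "?g v \<in> V" if vV: "v \<in> V'" for v
  proof -
    obtain w where vw: "(v,w)\<in>E'" using nb'[OF vV] by blast
    then have "\<psi> (v,w) \<in> E" by (rule B.maps)
    then show ?thesis using B.Ca[OF vw] EV by auto
  qed
  have bij: "bij_betw ?f V V'"
    by (rule bij_betw_byWitness[where f'="?g"]) (use gf fg fV gV in auto)
  have fe: "(?f v, ?f w) \<in> E'" if "(v,w)\<in>E" for v w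
    using A.Ca[OF that] A.maps[OF that] A.symE' by (auto simp: sym_def)
  have ge: "(?g v, ?g w) \<in> E" if "(v,w)\<in>E'" for v w
    using B.Ca[OF that] B.maps[OF that] B.symE' by (auto simp: sym_def)
  have "\<forall>v\<in>V. \<forall>w\<in>V. (v, w) \<in> E \<longleftrightarrow> (?f v, ?f w) \<in> E'"
    using fe ge gf by metis
  then show ?thesis unfolding graph_iso_def using bij by blast
qed

theorem theorem1p1:
  fixes V :: "'a set" and E :: "('a \<times> 'a) set"
    and V' :: "'b set" and E' :: "('b \<times> 'b) set"
  assumes "is_graph V E" and "no_isolated V E"
    and "is_graph V' E'" and "no_isolated V' E'"
  shows "graph_iso V E V' E' \<longleftrightarrow> z2_poset_iso (box_complex V E) (box_complex V' E')"
  using fwd[OF assms(1) assms(3)] bwd[OF assms] by blast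


end
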